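(* Let $A = A_s + A_i\epsilon\in\mathbb{DR}^{m\times n}$ with $m\ge n$ and $A_s$ of full column rank, and let $A_sP_s = Q_sR_s$ where $P_s\in\mathbb{R}^{n\times n}$ is a permutation matrix, $Q_s\in\mathbb{R}^{m\times n}$ has orthonormal columns and $R_s=(r_{s_{ij}})\in\mathbb{R}^{n\times n}$ is upper triangular and nonsingular. Put $B = Q_s^{\top}A_iP_s=[b_1,\dots,b_n]$. Define $P\in\mathbb{R}^{n\times n}$ with zero diagonal, strictly lower triangular part $$p_1(2{:}n) = b_1(2{:}n)/r_{s_{11}},\qquad p_k(k{+}1{:}n) = \Big(b_k(k{+}1{:}n) - \sum_{t=1}^{k-1} r_{s_{tk}}\,p_t(k{+}1{:}n)\Big)\Big/r_{s_{kk}},\quad k=2,\dots,n-1,$$ and $P^{\top}=-P$. Set $Q_i = (I_m - Q_sQ_s^{\top})A_iP_sR_s^{-1} + Q_sP$ and $R_i = Q_s^{\top}A_iP_s - PR_s$. Then $Q=Q_s+Q_i\epsilon$ satisfies $Q^{\top}Q=I_n$, $R = R_s+R_i\epsilon$ is upper triangular, and $AP_s = QR$.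
   Context: A dual number is $a = a_s + a_i\epsilon$ with $a_s,a_i\in\mathbb{R}$, where $\epsilon^2=0$, $\epsilon\neq 0$; $\mathbb{DR}^{m\times n}$ denotes the set of dual matrices $A = A_s + A_i\epsilon$ with $A_s, A_i\in\mathbb{R}^{m\times n}$. Products use $\epsilon^2=0$: $(A_s+A_i\epsilon)(B_s+B_i\epsilon) = A_sB_s + (A_sB_i + A_iB_s)\epsilon$. The transpose is $A^{\top}=A_s^{\top}+A_i^{\top}\epsilon$. A dual matrix is upper triangular if both parts are upper triangular. For a vector $v$, $v(a{:}b)$ is the subvector of entries $a$ through $b$. *)

theory Defs
  imports "Jordan_Normal_Form.DL_Rank" "Jordan_Normal_Form.Gauss_Jordan_Elimination"
    "HOL-Combinatorics.Permutations"
begin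

text \<open>Dual real matrices A = A_s + A_i eps, represented as pairs (A_s, A_i).\<close>
type_synonym dmat = "real mat \<times> real mat"

definition dmult :: "dmat \<Rightarrow> dmat \<Rightarrow> dmat" where
  "dmult A B = (fst A * fst B, fst A * snd B + snd A * fst B)"

definition dtrans :: "dmat \<Rightarrow> dmat" where
  "dtrans A = (transpose_mat (fst A), transpose_mat (snd A))"

definition dreal :: "real mat \<Rightarrow> dmat" where
  "dreal M = (M, 0\<^sub>m (dim_row M) (dim_col M))"

definition dupper_triangular :: "dmat \<Rightarrow> bool" where
  "dupper_triangular A \<longleftrightarrow> upper_triangular (fst A) \<and> upper_triangular (snd A)"

definition permutation_matrix :: "nat \<Rightarrow> real mat \<Rightarrow> bool" where
  "permutation_matrix n P \<longleftrightarrow>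
     (\<exists>\<sigma>. \<sigma> permutes {..<n} \<and> P = mat n n (\<lambda>(i,j). if i = \<sigma> j then 1 else 0))"

text \<open>Strictly lower part of P (0-indexed): entry (i,k) with i > k,
  P(i,k) = (B(i,k) - sum_{t<k} R(t,k) P(i,t)) / R(k,k).\<close>
fun plow :: "real mat \<Rightarrow> real mat \<Rightarrow> nat \<Rightarrow> nat \<Rightarrow> real" where
  "plow B R i k = (B $$ (i,k) - (\<Sum>t<k. R $$ (t,k) * plow B R i t)) / R $$ (k,k)"

definition Pmat :: "nat \<Rightarrow> real mat \<Rightarrow> real mat \<Rightarrow> real mat" where
  "Pmat n B R = mat n n (\<lambda>(i,j). if j < i then plow B R i j
                                 else if i < j then - plow B R j i else 0)"

end

theory Submission
  imports Defs
begin

declare plow.simps[simp del]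

lemma mat_cancel_aux:
  fixes A B C :: "real mat"
  assumes "A \<in> carrier_mat m n" "B \<in> carrier_mat m n" "C \<in> carrier_mat m n"
  shows "(A - B) + ((C - A) + B) = C"
  by (rule eq_matI, insert assms, auto)

lemma Rs_inv:
  assumes R: "Rs \<in> carrier_mat n n" and inv: "invertible_mat (Rs :: real mat)"
  shows "det Rs \<noteq> 0" "\<exists>Ri. mat_inverse Rs = Some Ri \<and> Ri * Rs = 1\<^sub>m n \<and> Ri \<in> carrier_mat n n"
proof -
  from inv obtain B where "inverts_mat Rs B" "inverts_mat B Rs"
    unfolding invertible_mat_def by auto
  hence RB: "Rs * B = 1\<^sub>m n" and BR: "B * Rs = 1\<^sub>m (dim_row B)" using R unfolding inverts_mat_def by auto
  have "dim_col B = n" using arg_cong[OF RB, of dim_col] by simp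
  moreover have "dim_row B = n" using arg_cong[OF BR, of dim_col] R by simp
  ultimately have B: "B \<in> carrier_mat n n" by auto
  from arg_cong[OF RB, of det, unfolded det_mult[OF R B] det_one]
  show d: "det Rs \<noteq> 0" by auto
  have U: "Rs \<in> Units (ring_mat TYPE(real) n undefined)" by (rule det_non_zero_imp_unit[OF R d])
  show "\<exists>Ri. mat_inverse Rs = Some Ri \<and> Ri * Rs = 1\<^sub>m n \<and> Ri \<in> carrier_mat n n"
  proof (cases "mat_inverse Rs")
    case None
    have "Rs \<notin> Units (ring_mat TYPE(real) n undefined)" by (rule mat_inverse(1)[OF R None])
    then show ?thesis using U by (rule notE)
  next
    case (Some Ri)
    then show ?thesis using mat_inverse(2)[OF R Some] by auto
  qed
qed

theorem mainTheorem4: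
  fixes m n :: nat and As Ai Ps Qs Rs :: "real mat"
  assumes "As \<in> carrier_mat m n" and "Ai \<in> carrier_mat m n" and "n \<le> m"
    and "vec_space.rank m As = n"
    and "Ps \<in> carrier_mat n n" and "permutation_matrix n Ps"
    and "Qs \<in> carrier_mat m n" and "transpose_mat Qs * Qs = 1\<^sub>m n"
    and "Rs \<in> carrier_mat n n" and "upper_triangular Rs" and "invertible_mat Rs"
    and "As * Ps = Qs * Rs"
  defines "B \<equiv> transpose_mat Qs * Ai * Ps"
  defines "P \<equiv> Pmat n B Rs"
  defines "Qi \<equiv> (1\<^sub>m m - Qs * transpose_mat Qs) * Ai * Ps * the (mat_inverse Rs) + Qs * P"
  defines "Ri \<equiv> transpose_mat Qs * Ai * Ps - P * Rs"
  shows "dmult (dtrans (Qs, Qi)) (Qs, Qi) = dreal (1\<^sub>m n)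
     \<and> dupper_triangular (Rs, Ri)
     \<and> dmult (As, Ai) (dreal Ps) = dmult (Qs, Qi) (Rs, Ri)"
proof -
  note As = assms(1) and Ai = assms(2) and Ps = assms(5) and Qs = assms(7) and QQ = assms(8)
    and Rs = assms(9) and ut = assms(10)
  obtain Rv where Rv: "mat_inverse Rs = Some Rv" "Rv * Rs = 1\<^sub>m n" "Rv \<in> carrier_mat n n"
    using Rs_inv(2)[OF Rs assms(11)] by auto
  have detR: "det Rs \<noteq> 0" using Rs_inv(1)[OF Rs assms(11)] .
  have diag: "Rs $$ (j,j) \<noteq> 0" if "j < n" for j
  proof
    assume "Rs $$ (j,j) = 0"
    hence "(\<Prod> i = 0 ..< dim_row Rs. Rs $$ (i,i)) = 0" using that Rs by auto
    thus False using detR det_upper_triangular[OF ut Rs] prod_list_diag_prod by metis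
  qed
  have Pc: "P \<in> carrier_mat n n" unfolding P_def Pmat_def by auto
  have Bc: "B \<in> carrier_mat n n" unfolding B_def using Qs Ai Ps by auto
  have PT: "transpose_mat P = - P"
    by (rule eq_matI, auto simp: P_def Pmat_def)
  define X where "X = Ai * Ps"
  have Xc: "X \<in> carrier_mat m n" unfolding X_def using Ai Ps by auto
  define QT where "QT = transpose_mat Qs"
  have QTc: "QT \<in> carrier_mat n m" unfolding QT_def using Qs by auto
  define M where "M = 1\<^sub>m m - Qs * QT"
  have Mc: "M \<in> carrier_mat m m" unfolding M_def using Qs QTc by auto
  have Qi': "Qi = M * X * Rv + Qs * P"
  proof -
    have "M * Ai * Ps = M * X" unfolding X_def by (rule assoc_mult_mat[OF Mc Ai Ps])
    thus ?thesis unfolding Qi_def M_def QT_def using Rv(1) by simp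
  qed
  have QQ': "QT * Qs = 1\<^sub>m n" using QQ unfolding QT_def .
  have MXc: "M * X \<in> carrier_mat m n" using Mc Xc by auto
  have c1: "M * X * Rv \<in> carrier_mat m n" using MXc Rv by auto
  have QTM: "QT * M = 0\<^sub>m n m"
  proof -
    have "QT * M = QT * 1\<^sub>m m - QT * (Qs * QT)"
      unfolding M_def by (rule mult_minus_distrib_mat[OF QTc], insert Qs QTc, auto)
    also have "QT * (Qs * QT) = (QT * Qs) * QT" by (rule assoc_mult_mat[OF QTc Qs QTc, symmetric])
    also have "\<dots> = QT" using QQ' QTc by simp
    finally show ?thesis using QTc by simp
  qed
  have QTQi: "QT * Qi = P"
  proof -
    have "QT * (M * X * Rv) = QT * (M * X) * Rv" by (rule assoc_mult_mat[OF QTc MXc Rv(3), symmetric])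
    also have "QT * (M * X) = QT * M * X" by (rule assoc_mult_mat[OF QTc Mc Xc, symmetric])
    finally have z: "QT * (M * X * Rv) = 0\<^sub>m n n" using QTM Xc Rv(3) by simp
    have "QT * Qi = QT * (M * X * Rv) + QT * (Qs * P)"
      unfolding Qi' by (rule mult_add_distrib_mat[OF QTc c1], insert Qs Pc, auto)
    also have "QT * (Qs * P) = QT * Qs * P" by (rule assoc_mult_mat[OF QTc Qs Pc, symmetric])
    also have "\<dots> = P" using QQ' Pc by simp
    finally show ?thesis using z Pc by simp
  qed
  have Qic: "Qi \<in> carrier_mat m n" unfolding Qi' using c1 Qs Pc by auto
  have part1: "dmult (dtrans (Qs, Qi)) (Qs, Qi) = dreal (1\<^sub>m n)"
  proof -
    have "transpose_mat Qi * Qs = transpose_mat Qi * transpose_mat QT"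
      unfolding QT_def transpose_transpose ..
    also have "\<dots> = transpose_mat (QT * Qi)" by (rule transpose_mult[OF QTc Qic, symmetric])
    also have "\<dots> = - P" unfolding QTQi PT ..
    finally have t: "transpose_mat Qi * Qs = - P" .
    have q: "transpose_mat Qs * Qi = P" using QTQi unfolding QT_def .
    have e: "transpose_mat Qs * Qi + transpose_mat Qi * Qs = 0\<^sub>m n n"
      unfolding t q by (rule eq_matI, insert Pc, auto)
    show ?thesis unfolding dmult_def dtrans_def dreal_def fst_conv snd_conv e QQ
        index_one_mat(2,3) ..
  qed
  have part2: "upper_triangular Ri"
  proof
    fix i j assume ji: "j < i" and i: "i < dim_row Ri"
    have Ri2: "Ri = B - P * Rs" unfolding Ri_def B_def ..
    have PRc: "P * Rs \<in> carrier_mat n n" using Pc Rs by auto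
    have iN: "i < n" using i PRc Bc Pc unfolding Ri2 by simp
    have jN: "j < n" using ji iN by simp
    have pe: "P $$ (i,t) = plow B Rs i t" if "t < i" for t
      using that iN unfolding P_def Pmat_def by simp
    have "(P * Rs) $$ (i,j) = row P i \<bullet> col Rs j"
      using iN jN Pc Rs by simp
    also have "\<dots> = (\<Sum>t\<in>{0..<n}. P $$ (i,t) * Rs $$ (t,j))"
      unfolding scalar_prod_def using iN jN Pc Rs by simp
    also have "\<dots> = (\<Sum>t\<in>{0..<Suc j}. P $$ (i,t) * Rs $$ (t,j))"
    proof (rule sum.mono_neutral_right)
      show "\<forall>t\<in>{0..<n} - {0..<Suc j}. P $$ (i,t) * Rs $$ (t,j) = 0"
      proof
        fix t assume "t \<in> {0..<n} - {0..<Suc j}"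
        hence "j < t" "t < dim_row Rs" using Rs by auto
        hence "Rs $$ (t,j) = 0" by (rule upper_triangularD[OF ut])
        thus "P $$ (i,t) * Rs $$ (t,j) = 0" by simp
      qed
    qed (use jN in auto)
    also have "\<dots> = (\<Sum>t\<in>{0..<j}. P $$ (i,t) * Rs $$ (t,j)) + P $$ (i,j) * Rs $$ (j,j)"
      by simp
    also have "(\<Sum>t\<in>{0..<j}. P $$ (i,t) * Rs $$ (t,j)) = (\<Sum>t<j. Rs $$ (t,j) * plow B Rs i t)"
      unfolding lessThan_atLeast0 by (rule sum.cong, simp, insert ji, simp add: pe mult.commute)
    also have "P $$ (i,j) * Rs $$ (j,j) = B $$ (i,j) - (\<Sum>t<j. Rs $$ (t,j) * plow B Rs i t)"
      unfolding pe[OF ji] using diag[OF jN] by (simp add: plow.simps[of B Rs i j])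
    finally have "(P * Rs) $$ (i,j) = B $$ (i,j)" by simp
    moreover have "Ri $$ (i,j) = B $$ (i,j) - (P * Rs) $$ (i,j)"
      unfolding Ri2 using iN jN Bc PRc Pc Rs by simp
    ultimately show "Ri $$ (i,j) = 0" by simp
  qed
  have part3: "dmult (As, Ai) (dreal Ps) = dmult (Qs, Qi) (Rs, Ri)"
  proof -
    have PRc: "P * Rs \<in> carrier_mat n n" using Pc Rs by auto
    have QTXc: "QT * X \<in> carrier_mat n n" using QTc Xc by auto
    have a: "QT * Ai * Ps = QT * X" unfolding X_def by (rule assoc_mult_mat[OF QTc Ai Ps])
    have Ri': "Ri = QT * X - P * Rs" unfolding Ri_def QT_def[symmetric] a ..
    have e1: "Qs * Ri = Qs * QT * X - Qs * P * Rs"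
    proof -
      have "Qs * Ri = Qs * (QT * X) - Qs * (P * Rs)"
        unfolding Ri' by (rule mult_minus_distrib_mat[OF Qs QTXc PRc])
      also have "Qs * (QT * X) = Qs * QT * X" by (rule assoc_mult_mat[OF Qs QTc Xc, symmetric])
      also have "Qs * (P * Rs) = Qs * P * Rs" by (rule assoc_mult_mat[OF Qs Pc Rs, symmetric])
      finally show ?thesis .
    qed
    have e2: "Qi * Rs = M * X + Qs * P * Rs"
    proof -
      have "Qi * Rs = M * X * Rv * Rs + Qs * P * Rs"
        unfolding Qi' by (rule add_mult_distrib_mat[OF c1 _ Rs], insert Qs Pc, auto)
      also have "M * X * Rv * Rs = M * X * (Rv * Rs)" by (rule assoc_mult_mat[OF MXc Rv(3) Rs])
      also have "\<dots> = M * X" unfolding Rv(2) by (rule right_mult_one_mat[OF MXc])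
      finally show ?thesis .
    qed
    have MX: "M * X = X - Qs * QT * X"
    proof -
      have "M * X = 1\<^sub>m m * X - Qs * QT * X"
        unfolding M_def by (rule minus_mult_distrib_mat[OF _ _ Xc], insert Qs QTc, auto)
      thus ?thesis unfolding left_mult_one_mat[OF Xc] .
    qed
    have "Qs * Ri + Qi * Rs = X"
    proof -
      have cA: "Qs * QT * X \<in> carrier_mat m n" "Qs * P * Rs \<in> carrier_mat m n"
        using Qs QTc Xc Pc Rs by auto
      have "Qs * Ri + Qi * Rs = (Qs * QT * X - Qs * P * Rs) + ((X - Qs * QT * X) + Qs * P * Rs)"
        unfolding e1 e2 MX ..
      also have "\<dots> = X" by (rule mat_cancel_aux[OF cA(1) cA(2) Xc])
      finally show ?thesis .
    qed
    note h2 = this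
    have AiPc: "Ai * Ps \<in> carrier_mat m n" using Xc unfolding X_def .
    have h1: "As * 0\<^sub>m n n + Ai * Ps = X" unfolding right_mult_zero_mat[OF As] X_def
      by (rule left_add_zero_mat[OF AiPc])
    have dr: "dim_row Ps = n" "dim_col Ps = n" using Ps by auto
    show ?thesis unfolding dmult_def dreal_def fst_conv snd_conv dr assms(12) h1 h2 ..
  qed
  show ?thesis using part1 part2 part3 ut unfolding dupper_triangular_def fst_conv snd_conv by blast
qed

end
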